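(* Let $K$ be a division ring. Then $K[G]$ is directly finite for every group $G$ if and only if for every $\mathrm{ULIE}_K$ group $\Gamma$, the group ring $K[\Gamma]$ is directly finite.
   Context: $K$ is a nonzero division ring; $K[G]$ is the group ring. A ring is directly finite if $xy=1$ implies $yx=1$. For integers $m,n\ge2$ let $S_{m,n}=\{0,\dots,m-1\}\times\{0,\dots,n-1\}$; for a partition $\pi$ of $S_{m,n}$ write $(i,j)\sim_\pi(i',j')$ if the two pairs lie in the same block. $\Gamma_\pi$ is the group with generators $a_0,\dots,a_{m-1},b_0,\dots,b_{n-1}$ and relations $a_0=b_0=1$ and $a_ib_j=a_{i'}b_{j'}$ whenever $(i,j)\sim_\pi(i',j')$. $\pi$ is nondegenerate if in $\Gamma_\pi$ the $a_i$ are pairwise distinct and the $b_j$ are pairwise distinct. Given nonzero $r_0,\dots,r_{m-1},s_0,\dots,s_{n-1}\in K$, $\pi$ is realizable with them if for every block $E$, $\sum_{(i,j)\in E}r_is_j$ equals $1$ if $(0,0)\in E$ and $0$ otherwise. With partitions ordered by refinement, $\pi$ is minimally realizable over $K$ if for some choice of nonzero $r_i,s_j\in K$ it is minimal among the partitions of $S_{m,n}$ realizable with those elements. An $\mathrm{ULIE}_K$ group is a group $\Gamma_\pi$ for some $m,n\ge2$ and some nondegenerate partition $\pi$ of $S_{m,n}$ minimally realizable over $K$. *)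

theory Defs
  imports "HOL-Algebra.Group" "HOL-Library.Disjoint_Sets"
begin

definition gr_elem :: "('g, 'b) monoid_scheme \<Rightarrow> ('g \<Rightarrow> 'k::division_ring) \<Rightarrow> bool" where
  "gr_elem G x \<longleftrightarrow> finite {g \<in> carrier G. x g \<noteq> 0} \<and> (\<forall>g. g \<notin> carrier G \<longrightarrow> x g = 0)"

definition gr_mult :: "('g, 'b) monoid_scheme \<Rightarrow> ('g \<Rightarrow> 'k::division_ring) \<Rightarrow> ('g \<Rightarrow> 'k) \<Rightarrow> 'g \<Rightarrow> 'k" where
  "gr_mult G x y = (\<lambda>g. if g \<in> carrier G
      then (\<Sum>h \<in> {h \<in> carrier G. x h \<noteq> 0}. x h * y (inv\<^bsub>G\<^esub> h \<otimes>\<^bsub>G\<^esub> g))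
      else 0)"

definition gr_one :: "('g, 'b) monoid_scheme \<Rightarrow> 'g \<Rightarrow> 'k::division_ring" where
  "gr_one G = (\<lambda>g. if g = \<one>\<^bsub>G\<^esub> then 1 else 0)"

definition group_ring_directly_finite :: "'k::division_ring itself \<Rightarrow> ('g, 'b) monoid_scheme \<Rightarrow> bool" where
  "group_ring_directly_finite TYPE('k) G \<longleftrightarrow>
     (\<forall>x y :: 'g \<Rightarrow> 'k. gr_elem G x \<and> gr_elem G y \<and> gr_mult G x y = gr_one G
        \<longrightarrow> gr_mult G y x = gr_one G)"

text \<open>Words: lists of letters (generator, exponent sign); True = +1, False = -1.\<close>
type_synonym 'x word = "('x \<times> bool) list"

inductive_set word_eq :: "('x word \<times> 'x word) set \<Rightarrow> ('x word \<times> 'x word) set"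
  for R :: "('x word \<times> 'x word) set" where
  weq_refl: "(w, w) \<in> word_eq R"
| weq_sym: "(v, w) \<in> word_eq R \<Longrightarrow> (w, v) \<in> word_eq R"
| weq_trans: "(u, v) \<in> word_eq R \<Longrightarrow> (v, w) \<in> word_eq R \<Longrightarrow> (u, w) \<in> word_eq R"
| weq_cancel: "(u @ [(x, e), (x, \<not> e)] @ v, u @ v) \<in> word_eq R"
| weq_rel: "(l, r) \<in> R \<Longrightarrow> (u @ l @ v, u @ r @ v) \<in> word_eq R"

definition word_class :: "('x word \<times> 'x word) set \<Rightarrow> 'x word \<Rightarrow> 'x word set" where
  "word_class R w = word_eq R `` {w}"

definition presented_group :: "'x set \<Rightarrow> ('x word \<times> 'x word) set \<Rightarrow> 'x word set monoid" where
  "presented_group X R =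
     \<lparr> carrier = {word_class R w | w. fst ` set w \<subseteq> X},
       mult = (\<lambda>A B. \<Union>a\<in>A. \<Union>b\<in>B. word_class R (a @ b)),
       one = word_class R [] \<rparr>"

definition S_set :: "nat \<Rightarrow> nat \<Rightarrow> (nat \<times> nat) set" where
  "S_set m n = {..<m} \<times> {..<n}"

text \<open>Generators: Inl i is a_i, Inr j is b_j.\<close>
definition Gamma_gens :: "nat \<Rightarrow> nat \<Rightarrow> (nat + nat) set" where
  "Gamma_gens m n = Inl ` {..<m} \<union> Inr ` {..<n}"

definition Gamma_rels :: "(nat \<times> nat) set set \<Rightarrow> ((nat + nat) word \<times> (nat + nat) word) set" where
  "Gamma_rels P =
     {([(Inl 0, True)], []), ([(Inr 0, True)], [])} \<union>
     {([(Inl i, True), (Inr j, True)], [(Inl i', True), (Inr j', True)]) | i j i' j'.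
        \<exists>E\<in>P. (i, j) \<in> E \<and> (i', j') \<in> E}"

definition Gamma :: "nat \<Rightarrow> nat \<Rightarrow> (nat \<times> nat) set set \<Rightarrow> (nat + nat) word set monoid" where
  "Gamma m n P = presented_group (Gamma_gens m n) (Gamma_rels P)"

definition nondegenerate :: "nat \<Rightarrow> nat \<Rightarrow> (nat \<times> nat) set set \<Rightarrow> bool" where
  "nondegenerate m n P \<longleftrightarrow>
     (\<forall>i<m. \<forall>i'<m. i \<noteq> i' \<longrightarrow>
        word_class (Gamma_rels P) [(Inl i, True)] \<noteq> word_class (Gamma_rels P) [(Inl i', True)]) \<and>
     (\<forall>j<n. \<forall>j'<n. j \<noteq> j' \<longrightarrow>
        word_class (Gamma_rels P) [(Inr j, True)] \<noteq> word_class (Gamma_rels P) [(Inr j', True)])"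

definition realizable :: "(nat \<times> nat) set set \<Rightarrow> (nat \<Rightarrow> 'k::division_ring) \<Rightarrow> (nat \<Rightarrow> 'k) \<Rightarrow> bool" where
  "realizable P r s \<longleftrightarrow>
     (\<forall>E\<in>P. (\<Sum>(i, j)\<in>E. r i * s j) = (if (0, 0) \<in> E then 1 else 0))"

definition refines :: "'a set set \<Rightarrow> 'a set set \<Rightarrow> bool" where
  "refines P Q \<longleftrightarrow> (\<forall>E\<in>P. \<exists>F\<in>Q. E \<subseteq> F)"

definition minimally_realizable ::
    "'k::division_ring itself \<Rightarrow> nat \<Rightarrow> nat \<Rightarrow> (nat \<times> nat) set set \<Rightarrow> bool" where
  "minimally_realizable TYPE('k) m n P \<longleftrightarrow>
     (\<exists>r s :: nat \<Rightarrow> 'k.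
        (\<forall>i<m. r i \<noteq> 0) \<and> (\<forall>j<n. s j \<noteq> 0) \<and> realizable P r s \<and>
        (\<forall>Q. partition_on (S_set m n) Q \<and> realizable Q r s \<and> refines Q P \<longrightarrow> Q = P))"

definition ULIE_partition :: "'k::division_ring itself \<Rightarrow> nat \<Rightarrow> nat \<Rightarrow> (nat \<times> nat) set set \<Rightarrow> bool" where
  "ULIE_partition TYPE('k) m n P \<longleftrightarrow>
     2 \<le> m \<and> 2 \<le> n \<and> partition_on (S_set m n) P \<and> nondegenerate m n P \<and>
     minimally_realizable TYPE('k) m n P"

end

theory Submission
  imports Defs "HOL-Library.Countable_Set"
begin

lemma word_eq_append:
  assumes "(v, w) \<in> word_eq R"
  shows "(u @ v @ z, u @ w @ z) \<in> word_eq R"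
  using assms
proof (induction rule: word_eq.induct)
  case (weq_refl w) then show ?case by (rule word_eq.weq_refl)
next
  case (weq_sym v w) then show ?case by (blast intro: word_eq.weq_sym)
next
  case (weq_trans a b c) then show ?case by (metis word_eq.weq_trans)
next
  case (weq_cancel u' x e v')
  from word_eq.weq_cancel[of "u @ u'" x e "v' @ z" R] show ?case by simp
next
  case (weq_rel l r u' v')
  from word_eq.weq_rel[OF weq_rel, of "u @ u'" "v' @ z"] show ?case by simp
qed

lemma word_eq_app2:
  assumes "(a, a') \<in> word_eq R" "(b, b') \<in> word_eq R"
  shows "(a @ b, a' @ b') \<in> word_eq R"
proof -
  have "(a @ b, a' @ b) \<in> word_eq R" using word_eq_append[OF assms(1), of "[]" b] by simp
  moreover have "(a' @ b, a' @ b') \<in> word_eq R" using word_eq_append[OF assms(2), of a' "[]"] by simp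
  ultimately show ?thesis by (rule word_eq.weq_trans)
qed

lemma equiv_word_eq: "equiv UNIV (word_eq R)"
  unfolding equiv_def refl_on_def sym_def trans_def
  by (auto intro: word_eq.intros)

lemma word_class_eq_iff: "word_class R v = word_class R w \<longleftrightarrow> (v, w) \<in> word_eq R"
  unfolding word_class_def using equiv_class_eq_iff[OF equiv_word_eq] by blast

lemma word_class_mem: "a \<in> word_class R w \<longleftrightarrow> (w, a) \<in> word_eq R"
  unfolding word_class_def by simp

lemma word_class_self: "w \<in> word_class R w"
  unfolding word_class_def by (simp add: word_eq.weq_refl)

lemma pg_mult_class:
  "(\<Union>a\<in>word_class R u. \<Union>b\<in>word_class R v. word_class R (a @ b)) = word_class R (u @ v)"
proof -
  have "word_class R (a @ b) = word_class R (u @ v)" if "a \<in> word_class R u" "b \<in> word_class R v" for a b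
    using that by (simp add: word_class_eq_iff word_class_mem word_eq_app2 word_eq.weq_sym)
  then show ?thesis using word_class_self[of u R] word_class_self[of v R] by blast
qed

definition winv :: "'x word \<Rightarrow> 'x word" where
  "winv w = rev (map (\<lambda>(x, e). (x, \<not> e)) w)"

lemma winv_cancel: "(winv w @ w, []) \<in> word_eq R"
proof (induction w)
  case Nil then show ?case by (simp add: winv_def word_eq.weq_refl)
next
  case (Cons a w)
  obtain x e where a: "a = (x, e)" by (cases a)
  have "(winv w @ [(x, \<not> e), (x, \<not> \<not> e)] @ w, winv w @ w) \<in> word_eq R"
    by (rule word_eq.weq_cancel)
  then have "(winv (a # w) @ a # w, winv w @ w) \<in> word_eq R" by (simp add: a winv_def)
  then show ?case using Cons word_eq.weq_trans by blast
qed

lemma pg_mult: "word_class R u \<otimes>\<^bsub>presented_group X R\<^esub> word_class R v = word_class R (u @ v)"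
  by (simp add: presented_group_def pg_mult_class)

lemma pg_one: "\<one>\<^bsub>presented_group X R\<^esub> = word_class R []"
  by (simp add: presented_group_def)

lemma pg_carrier: "carrier (presented_group X R) = {word_class R w | w. fst ` set w \<subseteq> X}"
  by (simp add: presented_group_def)

lemma group_presented: "group (presented_group X R)"
proof (rule groupI)
  fix a b assume "a \<in> carrier (presented_group X R)" "b \<in> carrier (presented_group X R)"
  then obtain u v where "a = word_class R u" "fst ` set u \<subseteq> X" "b = word_class R v" "fst ` set v \<subseteq> X"
    by (auto simp: pg_carrier)
  then show "a \<otimes>\<^bsub>presented_group X R\<^esub> b \<in> carrier (presented_group X R)"
    by (auto simp: pg_mult pg_carrier image_subset_iff intro!: exI[of _ "u @ v"]; force)
next
  show "\<one>\<^bsub>presented_group X R\<^esub> \<in> carrier (presented_group X R)"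
    by (auto simp: pg_one pg_carrier intro!: exI[of _ "[]"])
next
  fix a b c assume "a \<in> carrier (presented_group X R)" "b \<in> carrier (presented_group X R)"
     "c \<in> carrier (presented_group X R)"
  then obtain u v w where "a = word_class R u" "b = word_class R v" "c = word_class R w"
    by (auto simp: pg_carrier)
  then show "a \<otimes>\<^bsub>presented_group X R\<^esub> b \<otimes>\<^bsub>presented_group X R\<^esub> c =
      a \<otimes>\<^bsub>presented_group X R\<^esub> (b \<otimes>\<^bsub>presented_group X R\<^esub> c)"
    by (simp add: pg_mult)
next
  fix a assume "a \<in> carrier (presented_group X R)"
  then obtain u where "a = word_class R u" by (auto simp: pg_carrier)
  then show "\<one>\<^bsub>presented_group X R\<^esub> \<otimes>\<^bsub>presented_group X R\<^esub> a = a"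
    by (simp add: pg_mult pg_one)
next
  fix a assume "a \<in> carrier (presented_group X R)"
  then obtain u where a: "a = word_class R u" "fst ` set u \<subseteq> X" by (auto simp: pg_carrier)
  have "fst ` set (winv u) \<subseteq> X" using a(2) by (auto simp: winv_def)
  moreover have "word_class R (winv u @ u) = word_class R []"
    using winv_cancel[of u R] by (simp only: word_class_eq_iff)
  ultimately show "\<exists>y\<in>carrier (presented_group X R). y \<otimes>\<^bsub>presented_group X R\<^esub> a = \<one>\<^bsub>presented_group X R\<^esub>"
    using a by (simp add: pg_mult pg_one pg_carrier) (metis pg_mult)
qed

lemma countable_pg_carrier: "countable (carrier (presented_group (X :: 'x::countable set) R))"
proof -
  have "carrier (presented_group X R) \<subseteq> word_class R ` UNIV" by (auto simp: pg_carrier)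
  then show ?thesis by (rule countable_subset) simp
qed


definition tr_group :: "'h monoid \<Rightarrow> ('h \<Rightarrow> 'g) \<Rightarrow> 'g monoid" where
  "tr_group H f = \<lparr> carrier = f ` carrier H,
     mult = (\<lambda>a b. f (the_inv_into (carrier H) f a \<otimes>\<^bsub>H\<^esub> the_inv_into (carrier H) f b)),
     one = f \<one>\<^bsub>H\<^esub> \<rparr>"

lemma tr_group_mult:
  assumes "inj_on f (carrier H)" "a \<in> carrier H" "b \<in> carrier H"
  shows "f a \<otimes>\<^bsub>tr_group H f\<^esub> f b = f (a \<otimes>\<^bsub>H\<^esub> b)"
  using assms by (simp add: tr_group_def the_inv_into_f_f)

lemma tr_group_group:
  assumes H: "group H" and inj: "inj_on f (carrier H)"
  shows "group (tr_group H f)"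
proof (rule groupI)
  fix a b assume "a \<in> carrier (tr_group H f)" "b \<in> carrier (tr_group H f)"
  then obtain a' b' where "a = f a'" "b = f b'" "a' \<in> carrier H" "b' \<in> carrier H"
    by (auto simp: tr_group_def)
  then show "a \<otimes>\<^bsub>tr_group H f\<^esub> b \<in> carrier (tr_group H f)"
    using H inj by (simp add: tr_group_mult group.is_monoid monoid.m_closed) (simp add: tr_group_def monoid.m_closed group.is_monoid)
next
  show "\<one>\<^bsub>tr_group H f\<^esub> \<in> carrier (tr_group H f)"
    using H by (simp add: tr_group_def group.is_monoid monoid.one_closed)
next
  fix a b c assume "a \<in> carrier (tr_group H f)" "b \<in> carrier (tr_group H f)" "c \<in> carrier (tr_group H f)"
  then obtain a' b' c' where "a = f a'" "b = f b'" "c = f c'" "a' \<in> carrier H" "b' \<in> carrier H" "c' \<in> carrier H"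
    by (auto simp: tr_group_def)
  then show "a \<otimes>\<^bsub>tr_group H f\<^esub> b \<otimes>\<^bsub>tr_group H f\<^esub> c = a \<otimes>\<^bsub>tr_group H f\<^esub> (b \<otimes>\<^bsub>tr_group H f\<^esub> c)"
    using H inj by (simp add: tr_group_mult group.is_monoid monoid.m_closed monoid.m_assoc)
next
  fix a assume "a \<in> carrier (tr_group H f)"
  then obtain a' where "a = f a'" "a' \<in> carrier H" by (auto simp: tr_group_def)
  then show "\<one>\<^bsub>tr_group H f\<^esub> \<otimes>\<^bsub>tr_group H f\<^esub> a = a"
    using H inj tr_group_mult[OF inj, of "\<one>\<^bsub>H\<^esub>" a']
    by (simp add: group.is_monoid monoid.one_closed monoid.l_one) (simp add: tr_group_def)
next
  fix a assume "a \<in> carrier (tr_group H f)"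
  then obtain a' where a: "a = f a'" "a' \<in> carrier H" by (auto simp: tr_group_def)
  have "f (inv\<^bsub>H\<^esub> a') \<in> carrier (tr_group H f)" using H a by (simp add: tr_group_def)
  moreover have "f (inv\<^bsub>H\<^esub> a') \<otimes>\<^bsub>tr_group H f\<^esub> a = \<one>\<^bsub>tr_group H f\<^esub>"
    using H inj a tr_group_mult[OF inj, of "inv\<^bsub>H\<^esub> a'" a'] by (simp add: tr_group_def group.l_inv)
  ultimately show "\<exists>y\<in>carrier (tr_group H f). y \<otimes>\<^bsub>tr_group H f\<^esub> a = \<one>\<^bsub>tr_group H f\<^esub>" by blast
qed

lemma tr_group_inv:
  assumes H: "group H" and inj: "inj_on f (carrier H)" and a: "a \<in> carrier H"
  shows "inv\<^bsub>tr_group H f\<^esub> (f a) = f (inv\<^bsub>H\<^esub> a)"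
proof -
  have G: "group (tr_group H f)" by (rule tr_group_group[OF H inj])
  have "f (inv\<^bsub>H\<^esub> a) \<otimes>\<^bsub>tr_group H f\<^esub> f a = \<one>\<^bsub>tr_group H f\<^esub>"
    using H inj a tr_group_mult[OF inj, of "inv\<^bsub>H\<^esub> a" a] by (simp add: tr_group_def group.l_inv)
  moreover have "f a \<in> carrier (tr_group H f)" "f (inv\<^bsub>H\<^esub> a) \<in> carrier (tr_group H f)"
    using H a by (auto simp: tr_group_def)
  ultimately show ?thesis using group.inv_equality[OF G] by blast
qed

definition tr_elem :: "'h monoid \<Rightarrow> ('h \<Rightarrow> 'g) \<Rightarrow> ('h \<Rightarrow> 'k::division_ring) \<Rightarrow> 'g \<Rightarrow> 'k" where
  "tr_elem H f x = (\<lambda>a. if a \<in> f ` carrier H then x (the_inv_into (carrier H) f a) else 0)"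

lemma tr_elem_f: "inj_on f (carrier H) \<Longrightarrow> b \<in> carrier H \<Longrightarrow> tr_elem H f x (f b) = x b"
  by (simp add: tr_elem_def the_inv_into_f_f)

lemma tr_supp:
  assumes "inj_on f (carrier H)"
  shows "{a \<in> carrier (tr_group H f). tr_elem H f x a \<noteq> 0} = f ` {h \<in> carrier H. x h \<noteq> 0}"
  using assms by (auto simp: tr_group_def tr_elem_f)

lemma tr_gr_elem:
  assumes "inj_on f (carrier H)" "gr_elem H x"
  shows "gr_elem (tr_group H f) (tr_elem H f x)"
  using assms unfolding gr_elem_def
  by (simp add: tr_supp) (simp add: tr_group_def tr_elem_def)

lemma tr_mult:
  assumes H: "group H" and inj: "inj_on f (carrier H)" and b: "b \<in> carrier H"
  shows "gr_mult (tr_group H f) (tr_elem H f x) (tr_elem H f y) (f b) = gr_mult H x y b"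
proof -
  have fb: "f b \<in> carrier (tr_group H f)" using b by (simp add: tr_group_def)
  have inj2: "inj_on f {h \<in> carrier H. x h \<noteq> 0}" using inj by (rule inj_on_subset) auto
  have "gr_mult (tr_group H f) (tr_elem H f x) (tr_elem H f y) (f b) =
     (\<Sum>a \<in> f ` {h \<in> carrier H. x h \<noteq> 0}. tr_elem H f x a * tr_elem H f y (inv\<^bsub>tr_group H f\<^esub> a \<otimes>\<^bsub>tr_group H f\<^esub> f b))"
    using fb by (simp add: gr_mult_def tr_supp[OF inj])
  also have "\<dots> = (\<Sum>h \<in> {h \<in> carrier H. x h \<noteq> 0}. tr_elem H f x (f h) * tr_elem H f y (inv\<^bsub>tr_group H f\<^esub> (f h) \<otimes>\<^bsub>tr_group H f\<^esub> f b))"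
    by (rule sum.reindex[OF inj2, unfolded comp_def])
  also have "\<dots> = (\<Sum>h \<in> {h \<in> carrier H. x h \<noteq> 0}. x h * y (inv\<^bsub>H\<^esub> h \<otimes>\<^bsub>H\<^esub> b))"
  proof (rule sum.cong[OF refl])
    fix h assume "h \<in> {h \<in> carrier H. x h \<noteq> 0}"
    then have h: "h \<in> carrier H" by simp
    have "inv\<^bsub>tr_group H f\<^esub> (f h) \<otimes>\<^bsub>tr_group H f\<^esub> f b = f (inv\<^bsub>H\<^esub> h \<otimes>\<^bsub>H\<^esub> b)"
      using H inj h b by (simp add: tr_group_inv tr_group_mult)
    moreover have "inv\<^bsub>H\<^esub> h \<otimes>\<^bsub>H\<^esub> b \<in> carrier H" using H h b by (simp add: group.inv_closed monoid.m_closed group.is_monoid)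
    ultimately show "tr_elem H f x (f h) * tr_elem H f y (inv\<^bsub>tr_group H f\<^esub> (f h) \<otimes>\<^bsub>tr_group H f\<^esub> f b) =
        x h * y (inv\<^bsub>H\<^esub> h \<otimes>\<^bsub>H\<^esub> b)" using inj h by (simp add: tr_elem_f)
  qed
  also have "\<dots> = gr_mult H x y b" using b by (simp add: gr_mult_def)
  finally show ?thesis .
qed

lemma tr_one:
  assumes H: "group H" and inj: "inj_on f (carrier H)" and b: "b \<in> carrier H"
  shows "gr_one (tr_group H f) (f b) = gr_one H b"
  using H inj b by (simp add: gr_one_def tr_group_def inj_on_eq_iff group.is_monoid monoid.one_closed)

lemma gr_mult_out: "g \<notin> carrier G \<Longrightarrow> gr_mult G x y g = 0"
  by (simp add: gr_mult_def)

lemma gr_one_out: "group G \<Longrightarrow> g \<notin> carrier G \<Longrightarrow> gr_one G g = 0"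
  by (auto simp: gr_one_def) (metis group.is_monoid monoid.one_closed)

lemma transfer_DF:
  assumes H: "group H" and inj: "inj_on f (carrier H)"
    and DF: "group_ring_directly_finite TYPE('k::division_ring) (tr_group H f)"
  shows "group_ring_directly_finite TYPE('k) H"
  unfolding group_ring_directly_finite_def
proof (intro allI impI)
  fix x y :: "_ \<Rightarrow> 'k" assume A: "gr_elem H x \<and> gr_elem H y \<and> gr_mult H x y = gr_one H"
  have "gr_mult (tr_group H f) (tr_elem H f x) (tr_elem H f y) = gr_one (tr_group H f)"
  proof
    fix a show "gr_mult (tr_group H f) (tr_elem H f x) (tr_elem H f y) a = gr_one (tr_group H f) a"
    proof (cases "a \<in> carrier (tr_group H f)")
      case True
      then obtain b where "a = f b" "b \<in> carrier H" by (auto simp: tr_group_def)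
      then show ?thesis using A H inj by (simp add: tr_mult tr_one)
    next
      case False then show ?thesis using tr_group_group[OF H inj] by (simp add: gr_mult_out gr_one_out)
    qed
  qed
  then have E: "gr_mult (tr_group H f) (tr_elem H f y) (tr_elem H f x) = gr_one (tr_group H f)"
    using DF A tr_gr_elem[OF inj] unfolding group_ring_directly_finite_def by blast
  show "gr_mult H y x = gr_one H"
  proof
    fix b show "gr_mult H y x b = gr_one H b"
    proof (cases "b \<in> carrier H")
      case True
      then show ?thesis using E tr_mult[OF H inj True, of y x] tr_one[OF H inj True] by metis
    next
      case False then show ?thesis using H by (simp add: gr_mult_out gr_one_out)
    qed
  qed
qed

lemma countable_to_infinite:
  assumes "infinite (UNIV :: 'g set)" "countable (A :: 'h set)"
  shows "\<exists>f :: 'h \<Rightarrow> 'g. inj_on f A"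
proof -
  obtain e :: "nat \<Rightarrow> 'g" where e: "inj e" using infinite_countable_subset[OF assms(1)] by blast
  obtain c :: "'h \<Rightarrow> nat" where "inj_on c A" using assms(2) by (rule countableE)
  then have "inj_on (e \<circ> c) A" using e by (simp add: comp_inj_on inj_on_subset)
  then show ?thesis by blast
qed


definition mk :: "('g, 'b) monoid_scheme \<Rightarrow> (nat \<Rightarrow> 'g) \<Rightarrow> (nat \<Rightarrow> 'k::division_ring) \<Rightarrow> nat \<Rightarrow> 'g \<Rightarrow> 'k" where
  "mk G p r m = (\<lambda>g. if g \<in> carrier G then (\<Sum>i<m. if p i = g then r i else 0) else 0)"

lemma mk_supp: "{g \<in> carrier G. mk G p r m g \<noteq> 0} \<subseteq> p ` {..<m}"
proof
  fix g assume "g \<in> {g \<in> carrier G. mk G p r m g \<noteq> 0}"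
  then have "(\<Sum>i<m. if p i = g then r i else 0) \<noteq> 0" by (auto simp: mk_def split: if_splits)
  show "g \<in> p ` {..<m}"
  proof (rule ccontr)
    assume "g \<notin> p ` {..<m}"
    then have "(\<Sum>i<m. if p i = g then r i else 0) = 0" by (intro sum.neutral) auto
    with \<open>(\<Sum>i<m. if p i = g then r i else 0) \<noteq> 0\<close> show False by simp
  qed
qed

lemma gr_elem_mk: "gr_elem G (mk G p r m)"
  unfolding gr_elem_def using finite_subset[OF mk_supp[of G p r m]]
  by (auto simp: mk_def)

lemma conv:
  fixes r s :: "nat \<Rightarrow> 'k::division_ring" and G :: "('g, 'b) monoid_scheme" (structure)
  assumes G: "group G" and p: "\<forall>i<m. p i \<in> carrier G" and q: "\<forall>j<n. q j \<in> carrier G"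
    and g: "g \<in> carrier G"
  shows "gr_mult G (mk G p r m) (mk G q s n) g =
     (\<Sum>i<m. \<Sum>j<n. if p i \<otimes>\<^bsub>G\<^esub> q j = g then r i * s j else 0)"
proof -
  interpret G: group G by (rule G)
  let ?X = "mk G p r m" and ?Y = "mk G q s n"
  let ?F = "p ` {..<m}"
  have FC: "?F \<subseteq> carrier G" using p by auto
  have "gr_mult G ?X ?Y g = (\<Sum>h \<in> {h \<in> carrier G. ?X h \<noteq> 0}. ?X h * ?Y (inv h \<otimes> g))"
    using g by (simp add: gr_mult_def)
  also have "\<dots> = (\<Sum>h \<in> ?F. ?X h * ?Y (inv h \<otimes> g))"
    by (rule sum.mono_neutral_left) (use mk_supp[of G p r m] FC in auto)
  also have "\<dots> = (\<Sum>h \<in> ?F. \<Sum>i<m. (if p i = h then r i * ?Y (inv h \<otimes> g) else 0))"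
  proof (rule sum.cong[OF refl])
    fix h assume "h \<in> ?F"
    then have "h \<in> carrier G" using FC by blast
    then have "?X h = (\<Sum>i<m. if p i = h then r i else 0)" by (simp add: mk_def)
    then show "?X h * ?Y (inv h \<otimes> g) = (\<Sum>i<m. (if p i = h then r i * ?Y (inv h \<otimes> g) else 0))"
      by (simp add: sum_distrib_right) (intro sum.cong refl, auto)
  qed
  also have "\<dots> = (\<Sum>i<m. \<Sum>h \<in> ?F. (if p i = h then r i * ?Y (inv h \<otimes> g) else 0))"
    by (rule sum.swap)
  also have "\<dots> = (\<Sum>i<m. r i * ?Y (inv (p i) \<otimes> g))"
    by (rule sum.cong[OF refl]) (simp add: sum.delta)
  also have "\<dots> = (\<Sum>i<m. \<Sum>j<n. if p i \<otimes> q j = g then r i * s j else 0)"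
  proof (rule sum.cong[OF refl])
    fix i assume i: "i \<in> {..<m}"
    then have pi: "p i \<in> carrier G" using p by auto
    have "?Y (inv (p i) \<otimes> g) = (\<Sum>j<n. if q j = inv (p i) \<otimes> g then s j else 0)"
      using pi g by (simp add: mk_def)
    moreover have "q j = inv (p i) \<otimes> g \<longleftrightarrow> p i \<otimes> q j = g" if "j < n" for j
    proof -
      have qj: "q j \<in> carrier G" using q that by auto
      have e: "q j = inv (p i) \<otimes> g \<longleftrightarrow> g = p i \<otimes> q j" by (rule G.inv_solve_left[OF qj pi g])
      show ?thesis using e by (simp only: eq_commute[of g])
    qed
    ultimately show "r i * ?Y (inv (p i) \<otimes> g) = (\<Sum>j<n. if p i \<otimes> q j = g then r i * s j else 0)"
      by (simp add: sum_distrib_left if_distrib cong: if_cong)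
  qed
  finally show ?thesis .
qed


primrec weval :: "('g, 'b) monoid_scheme \<Rightarrow> ('x \<Rightarrow> 'g) \<Rightarrow> 'x word \<Rightarrow> 'g" where
  "weval G f [] = \<one>\<^bsub>G\<^esub>"
| "weval G f (a # w) = (if snd a then f (fst a) else inv\<^bsub>G\<^esub> (f (fst a))) \<otimes>\<^bsub>G\<^esub> weval G f w"

context group
begin

lemma weval_closed: "\<forall>x. f x \<in> carrier G \<Longrightarrow> weval G f w \<in> carrier G"
  by (induction w) auto

lemma weval_append: "\<forall>x. f x \<in> carrier G \<Longrightarrow> weval G f (u @ v) = weval G f u \<otimes> weval G f v"
  by (induction u) (auto simp: weval_closed m_assoc)

lemma weval_word_eq:
  assumes f: "\<forall>x. f x \<in> carrier G" and R: "\<forall>(l, r) \<in> R. weval G f l = weval G f r"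
    and vw: "(v, w) \<in> word_eq R"
  shows "weval G f v = weval G f w"
  using vw
proof (induction rule: word_eq.induct)
  case (weq_cancel u x e v)
  have w: "weval G f v \<in> carrier G" using weval_closed[OF f] .
  have fx: "f x \<in> carrier G" using f by blast
  have c1: "f x \<otimes> (inv f x \<otimes> weval G f v) = weval G f v"
    using w fx by (simp add: m_assoc[symmetric])
  have c2: "inv f x \<otimes> (f x \<otimes> weval G f v) = weval G f v"
    using w fx by (simp add: m_assoc[symmetric])
  show ?case using f c1 c2 by (simp add: weval_append)
next
  case (weq_rel l r u v)
  then show ?case using R f by (auto simp: weval_append)
qed auto

lemma weval_class:
  assumes f: "\<forall>x. f x \<in> carrier G" and R: "\<forall>(l, r) \<in> R. weval G f l = weval G f r"
    and eq: "word_class R v = word_class R w"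
  shows "weval G f v = weval G f w"
  using weval_word_eq[OF f R] eq by (simp add: word_class_eq_iff)

end

lemma Gamma_group: "group (Gamma m n P)"
  unfolding Gamma_def by (rule group_presented)

lemma Gamma_mult: "word_class (Gamma_rels P) u \<otimes>\<^bsub>Gamma m n P\<^esub> word_class (Gamma_rels P) v = word_class (Gamma_rels P) (u @ v)"
  unfolding Gamma_def by (rule pg_mult)

lemma Gamma_one: "\<one>\<^bsub>Gamma m n P\<^esub> = word_class (Gamma_rels P) []"
  unfolding Gamma_def by (rule pg_one)

lemma Gamma_carrier_a: "i < m \<Longrightarrow> word_class (Gamma_rels P) [(Inl i, True)] \<in> carrier (Gamma m n P)"
  unfolding Gamma_def pg_carrier Gamma_gens_def by auto

lemma Gamma_carrier_b: "j < n \<Longrightarrow> word_class (Gamma_rels P) [(Inr j, True)] \<in> carrier (Gamma m n P)"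
  unfolding Gamma_def pg_carrier Gamma_gens_def by auto

lemma countable_Gamma: "countable (carrier (Gamma m n P))"
  unfolding Gamma_def by (rule countable_pg_carrier)

lemma Gamma_rel_ab:
  assumes "E \<in> P" "(i, j) \<in> E" "(i', j') \<in> E"
  shows "word_class (Gamma_rels P) [(Inl i, True), (Inr j, True)] = word_class (Gamma_rels P) [(Inl i', True), (Inr j', True)]"
proof -
  have "([(Inl i, True), (Inr j, True)], [(Inl i', True), (Inr j', True)]) \<in> Gamma_rels P"
    using assms unfolding Gamma_rels_def by blast
  from word_eq.weq_rel[OF this, of "[]" "[]"] show ?thesis by (simp add: word_class_eq_iff)
qed

lemma Gamma_rel_a0: "word_class (Gamma_rels P) [(Inl 0, True)] = word_class (Gamma_rels P) []"
proof -
  have "([(Inl 0, True)], []) \<in> Gamma_rels P" unfolding Gamma_rels_def by blast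
  from word_eq.weq_rel[OF this, of "[]" "[]"] show ?thesis by (simp add: word_class_eq_iff)
qed

lemma Gamma_rel_b0: "word_class (Gamma_rels P) [(Inr 0, True)] = word_class (Gamma_rels P) []"
proof -
  have "([(Inr 0, True)], []) \<in> Gamma_rels P" unfolding Gamma_rels_def by blast
  from word_eq.weq_rel[OF this, of "[]" "[]"] show ?thesis by (simp add: word_class_eq_iff)
qed

lemma enum_first:
  assumes "finite A" "a \<in> A"
  shows "\<exists>e. bij_betw e {..<card A} A \<and> e 0 = a"
proof -
  obtain c where c: "c = card (A - {a})" by blast
  obtain e' where e': "bij_betw e' {0..<c} (A - {a})"
    using ex_bij_betw_nat_finite[of "A - {a}"] assms c by blast
  have cA: "card A = Suc c" using card_Suc_Diff1[OF assms] c by simp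
  define e where "e i = (if i = 0 then a else e' (i - 1))" for i
  have "bij_betw e {..<card A} A"
    unfolding bij_betw_def
  proof
    show "inj_on e {..<card A}"
    proof (rule inj_onI)
      fix i j assume ij: "i \<in> {..<card A}" "j \<in> {..<card A}" "e i = e j"
      have im: "k \<in> {..<card A} \<Longrightarrow> k \<noteq> 0 \<Longrightarrow> e' (k - 1) \<in> A - {a}" for k
        using e' cA by (auto simp: bij_betw_def)
      show "i = j"
      proof (cases "i = 0")
        case True
        show ?thesis
        proof (rule ccontr)
          assume "i \<noteq> j"
          then have "j \<noteq> 0" using True by simp
          then have "e j \<in> A - {a}" using im[OF ij(2)] by (simp add: e_def)
          moreover have "e i = a" using True by (simp add: e_def)
          ultimately show False using ij(3) by simp
        qed
      next
        case False
        show ?thesis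
        proof (cases "j = 0")
          case True
          have "e i \<in> A - {a}" using im[OF ij(1) False] by (simp add: e_def False)
          moreover have "e j = a" using True by (simp add: e_def)
          ultimately show ?thesis using ij(3) by simp
        next
          case jF: False
          then have "e' (i - 1) = e' (j - 1)" using ij False by (simp add: e_def)
          moreover have "i - 1 \<in> {0..<c}" "j - 1 \<in> {0..<c}"
            using ij cA False jF by auto
          ultimately have "i - 1 = j - 1" using e' by (auto simp: bij_betw_def inj_on_def)
          then show ?thesis using False jF by simp
        qed
      qed
    qed
    show "e ` {..<card A} = A"
    proof
      show "e ` {..<card A} \<subseteq> A" using e' cA assms(2) by (auto simp: e_def bij_betw_def)
      show "A \<subseteq> e ` {..<card A}"
      proof
        fix b assume b: "b \<in> A"
        show "b \<in> e ` {..<card A}"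
        proof (cases "b = a")
          case True then show ?thesis by (auto simp: e_def intro!: image_eqI[of _ _ 0] simp: cA)
        next
          case False
          then have "b \<in> e' ` {0..<c}" using e' b by (auto simp: bij_betw_def)
          then obtain k where "k < c" "e' k = b" by auto
          then show ?thesis using cA by (auto simp: e_def intro!: image_eqI[of _ _ "Suc k"])
        qed
      qed
    qed
  qed
  then show ?thesis using e_def by auto
qed


lemma mk_enum:
  assumes x: "gr_elem G x" and e: "bij_betw e {..<m} {g \<in> carrier G. x g \<noteq> 0}"
  shows "mk G e (\<lambda>i. x (e i)) m = x"
proof
  fix g show "mk G e (\<lambda>i. x (e i)) m g = x g"
  proof (cases "g \<in> carrier G")
    case True
    have fin: "finite {g \<in> carrier G. x g \<noteq> 0}" using x by (simp add: gr_elem_def)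
    have "mk G e (\<lambda>i. x (e i)) m g = (\<Sum>i<m. (\<lambda>a. if a = g then x a else 0) (e i))"
      using True by (simp add: mk_def)
    also have "\<dots> = (\<Sum>a \<in> {g \<in> carrier G. x g \<noteq> 0}. if a = g then x a else 0)"
      by (rule sum.reindex_bij_betw[OF e])
    also have "\<dots> = x g" using fin True by (simp add: sum.delta)
    finally show ?thesis .
  next
    case False then show ?thesis using x by (simp add: mk_def gr_elem_def)
  qed
qed

lemma solve_left:
  fixes a t c :: "'k::division_ring"
  assumes "a \<noteq> 0" "a * t = c" shows "t = inverse a * c"
proof -
  have "t = inverse a * (a * t)" using assms(1) by (simp add: mult.assoc[symmetric])
  then show ?thesis using assms(2) by simp
qed

lemma solve_right:
  fixes a t c :: "'k::division_ring"
  assumes "a \<noteq> 0" "t * a = c" shows "t = c * inverse a"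
proof -
  have "t = (t * a) * inverse a" using assms(1) by (simp add: mult.assoc)
  then show ?thesis using assms(2) by simp
qed

lemma (in group) inv_cancel_l: "b \<in> carrier G \<Longrightarrow> c \<in> carrier G \<Longrightarrow> inv b \<otimes> (b \<otimes> c) = c"
  by (simp add: m_assoc[symmetric])

lemma (in group) conj_iff:
  assumes a: "a \<in> carrier G" and b: "b \<in> carrier G" and c: "c \<in> carrier G"
  shows "b \<otimes> a = c \<longleftrightarrow> a \<otimes> b = a \<otimes> c \<otimes> inv a"
proof -
  have "a \<otimes> b = a \<otimes> c \<otimes> inv a \<longleftrightarrow> a \<otimes> c = a \<otimes> b \<otimes> a"
    using inv_solve_right[of "a \<otimes> b" "a \<otimes> c" a] a b c by simp
  also have "\<dots> \<longleftrightarrow> a \<otimes> c = a \<otimes> (b \<otimes> a)" using a b by (simp add: m_assoc)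
  also have "\<dots> \<longleftrightarrow> c = b \<otimes> a" using a b c by simp
  finally show ?thesis by auto
qed

locale dfsetup =
  fixes G :: "'g monoid" (structure)
    and x y :: "'g \<Rightarrow> 'k::division_ring"
    and m n :: nat and ge he :: "nat \<Rightarrow> 'g"
  assumes grp: "group G"
    and xe: "gr_elem G x" and ye: "gr_elem G y"
    and xy: "gr_mult G x y = gr_one G"
    and bx: "bij_betw ge {..<m} {g \<in> carrier G. x g \<noteq> 0}"
    and bY: "bij_betw he {..<n} {g \<in> carrier G. y g \<noteq> 0}"
    and m0: "0 < m" and n0: "0 < n"
    and h00: "ge 0 \<otimes> he 0 = \<one>"
begin

sublocale group G by (rule grp)

definition r :: "nat \<Rightarrow> 'k" where "r i = x (ge i)"
definition s :: "nat \<Rightarrow> 'k" where "s j = y (he j)"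

lemma ge_c: "i < m \<Longrightarrow> ge i \<in> carrier G" using bx by (auto simp: bij_betw_def)
lemma he_c: "j < n \<Longrightarrow> he j \<in> carrier G" using bY by (auto simp: bij_betw_def)
lemma r_nz: "i < m \<Longrightarrow> r i \<noteq> 0" using bx by (auto simp: bij_betw_def r_def)
lemma s_nz: "j < n \<Longrightarrow> s j \<noteq> 0" using bY by (auto simp: bij_betw_def s_def)
lemma ge_inj: "i < m \<Longrightarrow> i' < m \<Longrightarrow> ge i = ge i' \<Longrightarrow> i = i'"
  using bx by (auto simp: bij_betw_def inj_on_def)

lemma X: "mk G ge r m = x" unfolding r_def by (rule mk_enum[OF xe bx])
lemma Y: "mk G he s n = y" unfolding s_def by (rule mk_enum[OF ye bY])

lemma XY:
  assumes g: "g \<in> carrier G"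
  shows "(\<Sum>i<m. \<Sum>j<n. if ge i \<otimes> he j = g then r i * s j else 0) = (if g = \<one> then 1 else 0)"
proof -
  have "gr_mult G (mk G ge r m) (mk G he s n) g = (\<Sum>i<m. \<Sum>j<n. if ge i \<otimes> he j = g then r i * s j else 0)"
    by (rule conv[OF grp]) (use ge_c he_c g in auto)
  then show ?thesis using xy by (simp add: X Y gr_one_def)
qed

lemma YX:
  assumes g: "g \<in> carrier G"
  shows "gr_mult G y x g = (\<Sum>j<n. \<Sum>i<m. if he j \<otimes> ge i = g then s j * r i else 0)"
proof -
  have "gr_mult G (mk G he s n) (mk G ge r m) g = (\<Sum>j<n. \<Sum>i<m. if he j \<otimes> ge i = g then s j * r i else 0)"
    by (rule conv[OF grp]) (use ge_c he_c g in auto)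
  then show ?thesis by (simp add: X Y)
qed

lemma finish:
  assumes "\<And>g. g \<in> carrier G \<Longrightarrow> (\<Sum>j<n. \<Sum>i<m. if he j \<otimes> ge i = g then s j * r i else 0) = (if g = \<one> then 1 else 0)"
  shows "gr_mult G y x = gr_one G"
proof
  fix g show "gr_mult G y x g = gr_one G g"
  proof (cases "g \<in> carrier G")
    case True then show ?thesis using assms YX by (simp add: gr_one_def)
  next
    case False then show ?thesis using grp by (simp add: gr_mult_out gr_one_out)
  qed
qed

lemma case_m1:
  assumes m1: "m = 1"
  shows "gr_mult G y x = gr_one G"
proof (rule finish)
  fix g assume g: "g \<in> carrier G"
  have a: "ge 0 \<in> carrier G" using ge_c m0 by blast
  define g' where "g' = ge 0 \<otimes> g \<otimes> inv (ge 0)"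
  have g': "g' \<in> carrier G" using a g by (simp add: g'_def)
  have g'1: "g' = \<one> \<longleftrightarrow> g = \<one>"
  proof -
    have "g' = \<one> \<longleftrightarrow> ge 0 \<otimes> g = \<one> \<otimes> ge 0"
      unfolding g'_def using inv_solve_right'[of "\<one>" "ge 0 \<otimes> g" "ge 0"] a g by simp
    also have "\<dots> \<longleftrightarrow> ge 0 \<otimes> g = ge 0 \<otimes> \<one>" using a by simp
    also have "\<dots> \<longleftrightarrow> g = \<one>" using a g Units_l_cancel[of "ge 0" g "\<one>"] by simp
    finally show ?thesis .
  qed
  have e: "he j \<otimes> ge 0 = g \<longleftrightarrow> ge 0 \<otimes> he j = g'" if "j < n" for j
    unfolding g'_def using conj_iff[OF a he_c[OF that] g] .
  have "r 0 * (\<Sum>j<n. if ge 0 \<otimes> he j = g' then s j else 0) = (if g' = \<one> then 1 else 0)"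
    using XY[OF g'] m1 by (simp add: sum_distrib_left if_distrib cong: if_cong)
  then have S: "(\<Sum>j<n. if ge 0 \<otimes> he j = g' then s j else 0) = inverse (r 0) * (if g' = \<one> then 1 else 0)"
    by (rule solve_left[OF r_nz[OF m0]])
  have "(\<Sum>j<n. \<Sum>i<m. if he j \<otimes> ge i = g then s j * r i else 0) =
        (\<Sum>j<n. if ge 0 \<otimes> he j = g' then s j else 0) * r 0"
    using m1 e by (simp add: sum_distrib_right) (intro sum.cong refl, auto)
  also have "\<dots> = (if g = \<one> then 1 else 0)" using S g'1 r_nz[OF m0] by simp
  finally show "(\<Sum>j<n. \<Sum>i<m. if he j \<otimes> ge i = g then s j * r i else 0) = (if g = \<one> then 1 else 0)" .
qed


lemma case_n1:
  assumes n1: "n = 1"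
  shows "gr_mult G y x = gr_one G"
proof (rule finish)
  fix g assume g: "g \<in> carrier G"
  have a: "he 0 \<in> carrier G" using he_c n0 by blast
  define g' where "g' = inv (he 0) \<otimes> g \<otimes> he 0"
  have g': "g' \<in> carrier G" using a g by (simp add: g'_def)
  have gg: "he 0 \<otimes> g' \<otimes> inv (he 0) = g"
    using a g by (simp add: g'_def m_assoc) (simp add: m_assoc[symmetric])
  have g'1: "g' = \<one> \<longleftrightarrow> g = \<one>"
  proof
    assume "g' = \<one>" then show "g = \<one>" using gg a by simp
  next
    assume "g = \<one>" then show "g' = \<one>" using a by (simp add: g'_def)
  qed
  have e: "he 0 \<otimes> ge i = g \<longleftrightarrow> ge i \<otimes> he 0 = g'" if "i < m" for i
    using conj_iff[OF a ge_c[OF that] g'] gg by simp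
  have eq1: "(\<Sum>i<m. \<Sum>j<n. if ge i \<otimes> he j = g' then r i * s j else 0) = (\<Sum>i<m. if ge i \<otimes> he 0 = g' then r i else 0) * s 0"
    unfolding n1 by (simp add: sum_distrib_right) (intro sum.cong refl, auto)
  have "(\<Sum>i<m. if ge i \<otimes> he 0 = g' then r i else 0) * s 0 = (if g' = \<one> then 1 else 0)"
    by (simp only: eq1[symmetric] XY[OF g'])
  then have S: "(\<Sum>i<m. if ge i \<otimes> he 0 = g' then r i else 0) = (if g' = \<one> then 1 else 0) * inverse (s 0)"
    by (rule solve_right[OF s_nz[OF n0]])
  have "(\<Sum>j<n. \<Sum>i<m. if he j \<otimes> ge i = g then s j * r i else 0) =
        (\<Sum>i<m. if he 0 \<otimes> ge i = g then s 0 * r i else 0)"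
    unfolding n1 One_nat_def by simp
  also have "\<dots> = (\<Sum>i<m. s 0 * (if ge i \<otimes> he 0 = g' then r i else 0))"
    by (rule sum.cong[OF refl]) (use e in auto)
  also have "\<dots> = s 0 * (\<Sum>i<m. if ge i \<otimes> he 0 = g' then r i else 0)"
    by (simp add: sum_distrib_left)
  also have "\<dots> = (if g = \<one> then 1 else 0)" using S g'1 s_nz[OF n0] by simp
  finally show "(\<Sum>j<n. \<Sum>i<m. if he j \<otimes> ge i = g then s j * r i else 0) = (if g = \<one> then 1 else 0)" .
qed


definition v :: "nat \<times> nat \<Rightarrow> 'g" where "v p = ge (fst p) \<otimes> he (snd p)"
definition SS :: "(nat \<times> nat) set" where "SS = S_set m n"
definition rel :: "((nat \<times> nat) \<times> (nat \<times> nat)) set" where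
  "rel = {(p, q). p \<in> SS \<and> q \<in> SS \<and> v p = v q}"
definition pi0 :: "(nat \<times> nat) set set" where "pi0 = SS // rel"

lemma SS_fin: "finite SS" by (simp add: SS_def S_set_def)
lemma v_c: "p \<in> SS \<Longrightarrow> v p \<in> carrier G"
  by (auto simp: SS_def S_set_def v_def ge_c he_c)
lemma v00: "v (0, 0) = \<one>" using h00 by (simp add: v_def)
lemma SS00: "(0, 0) \<in> SS" using m0 n0 by (simp add: SS_def S_set_def)

lemma XYS:
  assumes g: "g \<in> carrier G"
  shows "(\<Sum>p\<in>SS. if v p = g then (case p of (i, j) \<Rightarrow> r i * s j) else 0) = (if g = \<one> then 1 else 0)"
proof -
  have "(\<Sum>p\<in>SS. if v p = g then (case p of (i, j) \<Rightarrow> r i * s j) else 0) =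
        (\<Sum>i<m. \<Sum>j<n. if ge i \<otimes> he j = g then r i * s j else 0)"
    unfolding SS_def S_set_def sum.cartesian_product by (rule sum.cong[OF refl]) (auto simp: v_def)
  then show ?thesis using XY[OF g] by simp
qed

lemma equiv_rel: "equiv SS rel"
  by (rule equivI) (auto simp: rel_def refl_on_def sym_def trans_def)

lemma partition_pi0: "partition_on SS pi0"
  unfolding pi0_def by (rule partition_on_quotient[OF equiv_rel])

lemma pi0_block:
  assumes "F \<in> pi0"
  obtains q where "q \<in> SS" "F = {p \<in> SS. v p = v q}"
proof -
  from assms obtain q where q: "q \<in> SS" "F = rel `` {q}" unfolding pi0_def by (rule quotientE)
  then have "F = {p \<in> SS. v p = v q}" by (auto simp: rel_def)
  then show ?thesis using q that by blast
qed

lemma realizable_pi0: "realizable pi0 r s"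
  unfolding realizable_def
proof
  fix E assume "E \<in> pi0"
  then obtain q where q: "q \<in> SS" and E: "E = {p \<in> SS. v p = v q}" by (rule pi0_block)
  have "(\<Sum>(i, j)\<in>E. r i * s j) = (\<Sum>p\<in>SS. if v p = v q then (case p of (i, j) \<Rightarrow> r i * s j) else 0)"
    unfolding E by (rule sum.inter_filter[OF SS_fin])
  also have "\<dots> = (if v q = \<one> then 1 else 0)" by (rule XYS[OF v_c[OF q]])
  also have "\<dots> = (if (0, 0) \<in> E then 1 else 0)" using SS00 v00 by (auto simp: E)
  finally show "(\<Sum>(i, j)\<in>E. r i * s j) = (if (0, 0) \<in> E then 1 else 0)" .
qed

definition prel :: "(nat \<times> nat) set set \<Rightarrow> ((nat \<times> nat) \<times> (nat \<times> nat)) set" where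
  "prel Q = {(x, y). \<exists>p \<in> Q. x \<in> p \<and> y \<in> p}"

lemma refines_trans: "refines A B \<Longrightarrow> refines B C \<Longrightarrow> refines A C"
  unfolding refines_def
proof (intro ballI)
  fix E assume AB: "\<forall>E\<in>A. \<exists>F\<in>B. E \<subseteq> F" and BC: "\<forall>E\<in>B. \<exists>F\<in>C. E \<subseteq> F" and E: "E \<in> A"
  from AB E obtain F where F: "F \<in> B" "E \<subseteq> F" by auto
  from BC F obtain H where "H \<in> C" "F \<subseteq> H" by auto
  then show "\<exists>H\<in>C. E \<subseteq> H" using F by (intro bexI[of _ H]) auto
qed

lemma exists_min:
  obtains Q0 where "partition_on SS Q0" "realizable Q0 r s" "refines Q0 pi0"
    "\<forall>Q. partition_on SS Q \<and> realizable Q r s \<and> refines Q Q0 \<longrightarrow> Q = Q0"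
proof -
  let ?C = "\<lambda>Q. partition_on SS Q \<and> realizable Q r s \<and> refines Q pi0"
  have Cpi: "?C pi0" using partition_pi0 realizable_pi0 unfolding refines_def by blast
  have "\<exists>Q0. ?C Q0 \<and> (\<forall>Q. ?C Q \<longrightarrow> card (prel Q0) \<le> card (prel Q))"
    by (rule ex_has_least_nat[of ?C pi0 "\<lambda>Q. card (prel Q)"]) (rule Cpi)
  then obtain Q0 where Q0: "?C Q0" and least: "\<forall>Q. ?C Q \<longrightarrow> card (prel Q0) \<le> card (prel Q)"
    by blast
  have minQ: "Q = Q0" if Q: "partition_on SS Q" "realizable Q r s" "refines Q Q0" for Q
  proof -
    have "refines Q pi0" by (rule refines_trans[OF Q(3)]) (use Q0 in simp)
    then have CQ: "?C Q" using Q(1,2) by simp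
    have sub: "prel Q \<subseteq> prel Q0"
    proof
      fix z assume "z \<in> prel Q"
      then obtain a b E where z: "z = (a, b)" "E \<in> Q" "a \<in> E" "b \<in> E" unfolding prel_def by auto
      from Q(3) z(2) obtain F where "F \<in> Q0" "E \<subseteq> F" unfolding refines_def by auto
      then show "z \<in> prel Q0" using z unfolding prel_def by auto
    qed
    have fin: "finite (prel Q0)"
    proof (rule finite_subset[of _ "SS \<times> SS"])
      have "\<Union>Q0 = SS" using Q0 by (simp add: partition_on_def)
      then show "prel Q0 \<subseteq> SS \<times> SS" unfolding prel_def by auto
    qed (simp add: SS_fin)
    have "card (prel Q0) \<le> card (prel Q)" by (rule least[rule_format, OF CQ])
    then have "card (prel Q) = card (prel Q0)" using card_mono[OF fin sub] by linarith
    then have "prel Q = prel Q0" by (rule card_subset_eq[OF fin sub])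
    moreover have "SS // prel Q = Q" unfolding prel_def by (rule partition_on_eq_quotient[OF Q(1)])
    moreover have "SS // prel Q0 = Q0" unfolding prel_def by (rule partition_on_eq_quotient) (use Q0 in blast)
    ultimately show "Q = Q0" by metis
  qed
  have minQ': "\<forall>Q. partition_on SS Q \<and> realizable Q r s \<and> refines Q Q0 \<longrightarrow> Q = Q0"
    using minQ by blast
  from Q0 have a: "partition_on SS Q0" and b: "realizable Q0 r s" and c: "refines Q0 pi0" by simp_all
  show ?thesis by (rule that[OF a b c minQ'])
qed


definition ff :: "nat + nat \<Rightarrow> 'g" where
  "ff = case_sum (\<lambda>i. if i < m then ge i \<otimes> inv (ge 0) else \<one>) (\<lambda>j. if j < n then ge 0 \<otimes> he j else \<one>)"

lemma ff_c: "\<forall>z. ff z \<in> carrier G"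
proof
  fix z show "ff z \<in> carrier G" using ge_c he_c m0 by (cases z) (auto simp: ff_def)
qed

lemma g0c: "ge 0 \<in> carrier G" using ge_c m0 by blast

lemma wab: "i < m \<Longrightarrow> j < n \<Longrightarrow> weval G ff [(Inl i, True), (Inr j, True)] = v (i, j)"
  using ge_c he_c g0c by (simp add: ff_def v_def m_assoc inv_cancel_l)

lemma wba: "j < n \<Longrightarrow> i < m \<Longrightarrow> weval G ff [(Inr j, True), (Inl i, True)] = ge 0 \<otimes> (he j \<otimes> ge i) \<otimes> inv (ge 0)"
  using ge_c he_c g0c by (simp add: ff_def m_assoc)

lemma respects:
  assumes partQ: "partition_on SS Q0" and refQ: "refines Q0 pi0"
  shows "\<forall>(l, rr) \<in> Gamma_rels Q0. weval G ff l = weval G ff rr"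
proof
  fix z assume z: "z \<in> Gamma_rels Q0"
  obtain l rr where lr: "z = (l, rr)" by (cases z)
  have "weval G ff l = weval G ff rr"
  proof -
    consider "l = [(Inl 0, True)]" "rr = []" | "l = [(Inr 0, True)]" "rr = []"
      | i j i' j' E where "l = [(Inl i, True), (Inr j, True)]" "rr = [(Inl i', True), (Inr j', True)]"
          "E \<in> Q0" "(i, j) \<in> E" "(i', j') \<in> E"
      using z lr unfolding Gamma_rels_def by blast
    then show ?thesis
    proof cases
      case 1 then show ?thesis using m0 g0c by (simp add: ff_def)
    next
      case 2 then show ?thesis using n0 h00 by (simp add: ff_def)
    next
      case (3 i j i' j' E)
      have ES: "E \<subseteq> SS" using partQ 3(3) unfolding partition_on_def by blast
      from refQ 3(3) obtain F where F: "F \<in> pi0" "E \<subseteq> F" unfolding refines_def by blast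
      from F(1) obtain q where q: "q \<in> SS" "F = {p \<in> SS. v p = v q}" by (rule pi0_block)
      have e1: "v (i, j) = v q" using F(2) q(2) 3(4) by blast
      have e2: "v (i', j') = v q" using F(2) q(2) 3(5) by blast
      have "i < m" "j < n" "i' < m" "j' < n" using ES 3(4,5) by (auto simp: SS_def S_set_def)
      then show ?thesis using 3(1,2) wab e1 e2 by simp
    qed
  qed
  then show "case z of (l, rr) \<Rightarrow> weval G ff l = weval G ff rr" using lr by simp
qed

lemma nondeg:
  assumes partQ: "partition_on SS Q0" and refQ: "refines Q0 pi0"
  shows "nondegenerate m n Q0"
  unfolding nondegenerate_def
proof (intro conjI allI impI)
  note R = respects[OF partQ refQ]
  fix i i' assume i: "i < m" "i' < m" "i \<noteq> i'"
  show "word_class (Gamma_rels Q0) [(Inl i, True)] \<noteq> word_class (Gamma_rels Q0) [(Inl i', True)]"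
  proof
    assume "word_class (Gamma_rels Q0) [(Inl i, True)] = word_class (Gamma_rels Q0) [(Inl i', True)]"
    from weval_class[OF ff_c R this] have "ge i \<otimes> inv (ge 0) = ge i' \<otimes> inv (ge 0)"
      using i ge_c g0c by (simp add: ff_def)
    then have "ge i = ge i'" using i ge_c g0c by simp
    then show False using ge_inj i by blast
  qed
next
  note R = respects[OF partQ refQ]
  fix j j' assume j: "j < n" "j' < n" "j \<noteq> j'"
  show "word_class (Gamma_rels Q0) [(Inr j, True)] \<noteq> word_class (Gamma_rels Q0) [(Inr j', True)]"
  proof
    assume "word_class (Gamma_rels Q0) [(Inr j, True)] = word_class (Gamma_rels Q0) [(Inr j', True)]"
    from weval_class[OF ff_c R this] have "ge 0 \<otimes> he j = ge 0 \<otimes> he j'"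
      using j he_c g0c by (simp add: ff_def)
    then have "he j = he j'" using j he_c g0c by simp
    then show False using bY j by (auto simp: bij_betw_def inj_on_def)
  qed
qed


lemma gamma_XY:
  assumes partQ: "partition_on SS Q0" and realQ: "realizable Q0 r s"
  shows "gr_mult (Gamma m n Q0) (mk (Gamma m n Q0) (\<lambda>i. word_class (Gamma_rels Q0) [(Inl i, True)]) r m)
           (mk (Gamma m n Q0) (\<lambda>j. word_class (Gamma_rels Q0) [(Inr j, True)]) s n) = gr_one (Gamma m n Q0)"
proof -
  let ?R = "Gamma_rels Q0" and ?Ga = "Gamma m n Q0"
  define c where "c p = word_class ?R [(Inl (fst p), True), (Inr (snd p), True)]" for p
  have grG: "group ?Ga" by (rule Gamma_group)
  have c00: "c (0, 0) = word_class ?R []"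
  proof -
    have "c (0, 0) = word_class ?R [(Inl 0, True)] \<otimes>\<^bsub>?Ga\<^esub> word_class ?R [(Inr 0, True)]"
      by (simp add: c_def Gamma_mult)
    also have "\<dots> = word_class ?R ([] @ [])" unfolding Gamma_rel_a0 Gamma_rel_b0 by (rule Gamma_mult)
    finally show ?thesis by simp
  qed
  have un: "\<Union>Q0 = SS" using partQ by (simp add: partition_on_def)
  have dj: "disjoint Q0" using partQ by (simp add: partition_on_def)
  have finQ: "finite Q0" using finite_elements[OF SS_fin partQ] .
  have cl: "c p = c q" if "E \<in> Q0" "p \<in> E" "q \<in> E" for E p q
    using Gamma_rel_ab[of E Q0 "fst p" "snd p" "fst q" "snd q"] that by (simp add: c_def)
  obtain E0 where E0: "E0 \<in> Q0" "(0, 0) \<in> E0" using SS00 un by blast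
  have E0u: "E = E0" if "E \<in> Q0" "(0, 0) \<in> E" for E
    using disjointD[OF dj that(1) E0(1)] that(2) E0(2) by blast
  have blocksum: "(\<Sum>p\<in>SS. if c p = \<gamma> then (case p of (i, j) \<Rightarrow> r i * s j) else 0) =
      (if \<gamma> = word_class ?R [] then 1 else 0)" for \<gamma>
  proof -
    define T where "T = {p \<in> SS. c p = \<gamma>}"
    define QT where "QT = {E \<in> Q0. E \<subseteq> T}"
    have closed: "E \<subseteq> T" if "E \<in> Q0" "p \<in> E" "p \<in> T" for E p
    proof
      fix q assume "q \<in> E"
      then have "q \<in> SS" "c q = c p" using that(1,2) un cl by blast+
      then show "q \<in> T" using that(3) by (simp add: T_def)
    qed
    have TU: "T = \<Union>QT"
    proof
      show "T \<subseteq> \<Union>QT"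
      proof
        fix p assume p: "p \<in> T"
        then have "p \<in> SS" by (simp add: T_def)
        then obtain E where E: "E \<in> Q0" "p \<in> E" using un by blast
        have "E \<subseteq> T" by (rule closed[OF E p])
        then show "p \<in> \<Union>QT" using E unfolding QT_def by blast
      qed
    qed (auto simp: QT_def)
    have "(\<Sum>p\<in>SS. if c p = \<gamma> then (case p of (i, j) \<Rightarrow> r i * s j) else 0) = (\<Sum>p\<in>T. case p of (i, j) \<Rightarrow> r i * s j)"
      unfolding T_def by (rule sum.inter_filter[OF SS_fin, symmetric])
    also have "\<dots> = (\<Sum>E\<in>QT. \<Sum>p\<in>E. case p of (i, j) \<Rightarrow> r i * s j)"
      unfolding TU
    proof (rule sum.Union_disjoint[unfolded comp_def])
      show "\<forall>A\<in>QT. finite A"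
      proof
        fix A assume "A \<in> QT"
        then have "A \<subseteq> SS" using un unfolding QT_def by blast
        then show "finite A" using SS_fin by (rule finite_subset)
      qed
      show "\<forall>A\<in>QT. \<forall>B\<in>QT. A \<noteq> B \<longrightarrow> A \<inter> B = {}"
      proof (intro ballI impI)
        fix A B assume "A \<in> QT" "B \<in> QT" "A \<noteq> B"
        then have "A \<in> Q0" "B \<in> Q0" "A \<noteq> B" unfolding QT_def by auto
        then show "A \<inter> B = {}" by (rule disjointD[OF dj])
      qed
    qed
    also have "\<dots> = (\<Sum>E\<in>QT. if E = E0 then 1 else 0)"
    proof (rule sum.cong[OF refl])
      fix E assume "E \<in> QT"
      then have E: "E \<in> Q0" by (simp add: QT_def)
      have "(\<Sum>p\<in>E. case p of (i, j) \<Rightarrow> r i * s j) = (if (0, 0) \<in> E then 1 else 0)"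
        using realQ E unfolding realizable_def by blast
      also have "\<dots> = (if E = E0 then 1 else 0)"
      proof (cases "(0, 0) \<in> E")
        case True then show ?thesis using E0u[OF E True] by simp
      next
        case False then show ?thesis using E0(2) by auto
      qed
      finally show "(\<Sum>p\<in>E. case p of (i, j) \<Rightarrow> r i * s j) = (if E = E0 then 1 else 0)" .
    qed
    also have "\<dots> = (if E0 \<in> QT then 1 else 0)"
    proof (rule sum.delta)
      show "finite QT" using finQ unfolding QT_def by simp
    qed
    also have "\<dots> = (if \<gamma> = word_class ?R [] then 1 else 0)"
    proof -
      have "E0 \<in> QT \<longleftrightarrow> (0, 0) \<in> T" using closed[OF E0(1) E0(2)] E0 by (auto simp: QT_def)
      also have "\<dots> \<longleftrightarrow> \<gamma> = word_class ?R []" using SS00 c00 by (auto simp: T_def)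
      finally show ?thesis by simp
    qed
    finally show ?thesis .
  qed
  show ?thesis
  proof
    fix \<gamma>
    show "gr_mult ?Ga (mk ?Ga (\<lambda>i. word_class ?R [(Inl i, True)]) r m) (mk ?Ga (\<lambda>j. word_class ?R [(Inr j, True)]) s n) \<gamma> = gr_one ?Ga \<gamma>"
    proof (cases "\<gamma> \<in> carrier ?Ga")
      case True
      have "gr_mult ?Ga (mk ?Ga (\<lambda>i. word_class ?R [(Inl i, True)]) r m) (mk ?Ga (\<lambda>j. word_class ?R [(Inr j, True)]) s n) \<gamma>
          = (\<Sum>i<m. \<Sum>j<n. if word_class ?R [(Inl i, True)] \<otimes>\<^bsub>?Ga\<^esub> word_class ?R [(Inr j, True)] = \<gamma> then r i * s j else 0)"
        by (rule conv[OF grG]) (use True Gamma_carrier_a Gamma_carrier_b in auto)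
      also have "\<dots> = (\<Sum>p\<in>SS. if c p = \<gamma> then (case p of (i, j) \<Rightarrow> r i * s j) else 0)"
        unfolding SS_def S_set_def sum.cartesian_product
      proof (rule sum.cong[OF refl])
        fix p :: "nat \<times> nat"
        obtain i j where p: "p = (i, j)" by (cases p)
        show "(case p of (i, j) \<Rightarrow> if word_class ?R [(Inl i, True)] \<otimes>\<^bsub>?Ga\<^esub> word_class ?R [(Inr j, True)] = \<gamma> then r i * s j else 0) =
            (if c p = \<gamma> then (case p of (i, j) \<Rightarrow> r i * s j) else 0)"
          unfolding p by (simp only: c_def Gamma_mult prod.case fst_conv snd_conv append.simps)
      qed
      also have "\<dots> = gr_one ?Ga \<gamma>" unfolding blocksum by (simp add: gr_one_def Gamma_one)
      finally show ?thesis .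
    next
      case False then show ?thesis using grG by (simp add: gr_mult_out gr_one_out)
    qed
  qed
qed


lemma gamma_final:
  assumes partQ: "partition_on SS Q0" and refQ: "refines Q0 pi0"
    and YXG: "gr_mult (Gamma m n Q0) (mk (Gamma m n Q0) (\<lambda>j. word_class (Gamma_rels Q0) [(Inr j, True)]) s n)
           (mk (Gamma m n Q0) (\<lambda>i. word_class (Gamma_rels Q0) [(Inl i, True)]) r m) = gr_one (Gamma m n Q0)"
  shows "gr_mult G y x = gr_one G"
proof -
  let ?R = "Gamma_rels Q0" and ?Ga = "Gamma m n Q0"
  define d where "d q = word_class ?R [(Inr (fst q), True), (Inl (snd q), True)]" for q
  define \<psi> where "\<psi> q = weval G ff [(Inr (fst q), True), (Inl (snd q), True)]" for q
  define UU where "UU = {..<n} \<times> {..<m}"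
  define h where "h = (\<lambda>q. case q of (j, i) \<Rightarrow> s j * r i)"
  have grG: "group ?Ga" by (rule Gamma_group)
  note R = respects[OF partQ refQ]
  have finU: "finite UU" by (simp add: UU_def)
  have dc: "d q \<in> carrier ?Ga" if "q \<in> UU" for q
  proof -
    have "d q = word_class ?R [(Inr (fst q), True)] \<otimes>\<^bsub>?Ga\<^esub> word_class ?R [(Inl (snd q), True)]"
      by (simp add: d_def Gamma_mult)
    then show ?thesis using that Gamma_carrier_a Gamma_carrier_b grG
      by (auto simp: UU_def group.is_monoid monoid.m_closed)
  qed
  have YXU: "(\<Sum>q\<in>UU. if d q = \<gamma> then h q else 0) = (if \<gamma> = word_class ?R [] then 1 else 0)"
    if \<gamma>: "\<gamma> \<in> carrier ?Ga" for \<gamma>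
  proof -
    have "(\<Sum>q\<in>UU. if d q = \<gamma> then h q else 0) =
        (\<Sum>j<n. \<Sum>i<m. if word_class ?R [(Inr j, True)] \<otimes>\<^bsub>?Ga\<^esub> word_class ?R [(Inl i, True)] = \<gamma> then s j * r i else 0)"
      unfolding UU_def sum.cartesian_product
    proof (rule sum.cong[OF refl])
      fix q :: "nat \<times> nat"
      obtain j i where q: "q = (j, i)" by (cases q)
      show "(if d q = \<gamma> then h q else 0) =
         (case q of (j, i) \<Rightarrow> if word_class ?R [(Inr j, True)] \<otimes>\<^bsub>?Ga\<^esub> word_class ?R [(Inl i, True)] = \<gamma> then s j * r i else 0)"
        unfolding q by (simp only: d_def h_def Gamma_mult prod.case fst_conv snd_conv append.simps)
    qed
    also have "\<dots> = gr_mult ?Ga (mk ?Ga (\<lambda>j. word_class ?R [(Inr j, True)]) s n) (mk ?Ga (\<lambda>i. word_class ?R [(Inl i, True)]) r m) \<gamma>"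
      by (rule conv[OF grG, symmetric]) (use \<gamma> Gamma_carrier_a Gamma_carrier_b in auto)
    also have "\<dots> = (if \<gamma> = word_class ?R [] then 1 else 0)" using YXG by (simp add: gr_one_def Gamma_one)
    finally show ?thesis .
  qed
  have dpsi: "\<psi> q = \<psi> q'" if "d q = d q'" for q q'
    using weval_class[OF ff_c R that[unfolded d_def]] by (simp add: \<psi>_def)
  have psi1: "\<psi> q = \<one>" if "d q = word_class ?R []" for q
    using weval_class[OF ff_c R that[unfolded d_def]] by (simp add: \<psi>_def)
  show ?thesis
  proof (rule finish)
    fix g assume g: "g \<in> carrier G"
    define g' where "g' = ge 0 \<otimes> g \<otimes> inv (ge 0)"
    have psi_iff: "he (fst q) \<otimes> ge (snd q) = g \<longleftrightarrow> \<psi> q = g'" if "q \<in> UU" for q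
    proof -
      have c: "he (fst q) \<in> carrier G" "ge (snd q) \<in> carrier G" using that he_c ge_c by (auto simp: UU_def)
      have "\<psi> q = ge 0 \<otimes> (he (fst q) \<otimes> ge (snd q)) \<otimes> inv (ge 0)"
        unfolding \<psi>_def by (rule wba) (use that in \<open>auto simp: UU_def\<close>)
      then show ?thesis unfolding g'_def using c g g0c by simp
    qed
    have g'1: "g' = \<one> \<longleftrightarrow> g = \<one>"
    proof -
      have "g' = \<one> \<longleftrightarrow> ge 0 \<otimes> g = \<one> \<otimes> ge 0"
        unfolding g'_def using inv_solve_right'[of "\<one>" "ge 0 \<otimes> g" "ge 0"] g0c g by simp
      also have "\<dots> \<longleftrightarrow> ge 0 \<otimes> g = ge 0 \<otimes> \<one>" using g0c by simp
      also have "\<dots> \<longleftrightarrow> g = \<one>" using g0c g Units_l_cancel[of "ge 0" g "\<one>"] by simp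
      finally show ?thesis .
    qed
    define T where "T = {q \<in> UU. \<psi> q = g'}"
    have "(\<Sum>j<n. \<Sum>i<m. if he j \<otimes> ge i = g then s j * r i else 0) = (\<Sum>q\<in>UU. if \<psi> q = g' then h q else 0)"
      unfolding UU_def sum.cartesian_product
    proof (rule sum.cong[OF refl])
      fix q assume q: "q \<in> {..<n} \<times> {..<m}"
      obtain j i where qq: "q = (j, i)" by (cases q)
      have "he j \<otimes> ge i = g \<longleftrightarrow> \<psi> q = g'" using psi_iff[of q] q qq by (simp add: UU_def)
      then show "(case q of (j, i) \<Rightarrow> if he j \<otimes> ge i = g then s j * r i else 0) = (if \<psi> q = g' then h q else 0)"
        unfolding qq h_def by simp
    qed
    also have "\<dots> = (\<Sum>q\<in>T. h q)" unfolding T_def by (rule sum.inter_filter[OF finU, symmetric])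
    also have "\<dots> = (\<Sum>\<gamma>\<in>d ` T. \<Sum>q\<in>{q \<in> T. d q = \<gamma>}. h q)"
      by (rule sum.image_gen) (simp add: T_def finU)
    also have "\<dots> = (\<Sum>\<gamma>\<in>d ` T. if \<gamma> = word_class ?R [] then 1 else 0)"
    proof (rule sum.cong[OF refl])
      fix \<gamma> assume "\<gamma> \<in> d ` T"
      then obtain q0 where q0: "q0 \<in> T" "\<gamma> = d q0" by blast
      have "{q \<in> T. d q = \<gamma>} = {q \<in> UU. d q = \<gamma>}"
      proof
        show "{q \<in> UU. d q = \<gamma>} \<subseteq> {q \<in> T. d q = \<gamma>}"
        proof
          fix q assume q: "q \<in> {q \<in> UU. d q = \<gamma>}"
          then have "d q = d q0" using q0 by simp
          then have "\<psi> q = \<psi> q0" by (rule dpsi)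
          then show "q \<in> {q \<in> T. d q = \<gamma>}" using q q0 by (simp add: T_def)
        qed
      qed (auto simp: T_def)
      then have "(\<Sum>q\<in>{q \<in> T. d q = \<gamma>}. h q) = (\<Sum>q\<in>UU. if d q = \<gamma> then h q else 0)"
        by (simp add: sum.inter_filter[OF finU])
      also have "\<dots> = (if \<gamma> = word_class ?R [] then 1 else 0)"
        by (rule YXU) (use q0 dc in \<open>auto simp: T_def\<close>)
      finally show "(\<Sum>q\<in>{q \<in> T. d q = \<gamma>}. h q) = (if \<gamma> = word_class ?R [] then 1 else 0)" .
    qed
    also have "\<dots> = (if word_class ?R [] \<in> d ` T then 1 else 0)"
      by (rule sum.delta) (simp add: T_def finU)
    also have "\<dots> = (if g = \<one> then 1 else 0)"
    proof -
      have "word_class ?R [] \<in> d ` T \<longleftrightarrow> g = \<one>"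
      proof
        assume "word_class ?R [] \<in> d ` T"
        then obtain q where q: "q \<in> T" "d q = word_class ?R []" by auto
        then have "\<psi> q = \<one>" by (intro psi1)
        then have "g' = \<one>" using q(1) by (simp add: T_def)
        then show "g = \<one>" using g'1 by simp
      next
        assume g1: "g = \<one>"
        have "(\<Sum>q\<in>UU. if d q = word_class ?R [] then h q else 0) = 1"
        proof -
          have "word_class ?R [] \<in> carrier ?Ga"
            using monoid.one_closed[OF group.is_monoid[OF grG]] by (simp add: Gamma_one)
          from YXU[OF this] show ?thesis by simp
        qed
        have "\<exists>q\<in>UU. d q = word_class ?R []"
        proof (rule ccontr)
          assume "\<not> (\<exists>q\<in>UU. d q = word_class ?R [])"
          then have "(\<Sum>q\<in>UU. if d q = word_class ?R [] then h q else 0) = 0" by (intro sum.neutral) auto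
          with \<open>(\<Sum>q\<in>UU. if d q = word_class ?R [] then h q else 0) = 1\<close> show False by simp
        qed
        then obtain q where q: "q \<in> UU" "d q = word_class ?R []" by blast
        then have "\<psi> q = \<one>" by (intro psi1)
        then have "q \<in> T" using q(1) g1 g'1 by (simp add: T_def)
        then show "word_class ?R [] \<in> d ` T" using q(2) by (intro image_eqI[of _ _ q]) simp_all
      qed
      then show ?thesis by simp
    qed
    finally show "(\<Sum>j<n. \<Sum>i<m. if he j \<otimes> ge i = g then s j * r i else 0) = (if g = \<one> then 1 else 0)" .
  qed
qed

end


lemma reverse_dir:
  fixes G :: "'g monoid" (structure)
  assumes RHS: "\<forall>m n P. ULIE_partition TYPE('k::division_ring) m n P \<longrightarrow>
             group_ring_directly_finite TYPE('k) (Gamma m n P)"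
    and grp: "group G"
  shows "group_ring_directly_finite TYPE('k) G"
  unfolding group_ring_directly_finite_def
proof (intro allI impI)
  interpret group G by (rule grp)
  fix x y :: "'g \<Rightarrow> 'k" assume A: "gr_elem G x \<and> gr_elem G y \<and> gr_mult G x y = gr_one G"
  then have xe: "gr_elem G x" and ye: "gr_elem G y" and xy: "gr_mult G x y = gr_one G" by auto
  let ?A = "{g \<in> carrier G. x g \<noteq> 0}" and ?B = "{g \<in> carrier G. y g \<noteq> 0}"
  have finA: "finite ?A" using xe by (simp add: gr_elem_def)
  have finB: "finite ?B" using ye by (simp add: gr_elem_def)
  have "\<exists>h\<in>?A. y (inv h \<otimes> \<one>) \<noteq> 0"
  proof (rule ccontr)
    assume "\<not> (\<exists>h\<in>?A. y (inv h \<otimes> \<one>) \<noteq> 0)"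
    then have "(\<Sum>h\<in>?A. x h * y (inv h \<otimes> \<one>)) = 0" by (intro sum.neutral) auto
    moreover have "gr_mult G x y \<one> = (\<Sum>h\<in>?A. x h * y (inv h \<otimes> \<one>))" by (simp add: gr_mult_def)
    moreover have "gr_mult G x y \<one> = 1" using xy by (simp add: gr_one_def)
    ultimately show False by simp
  qed
  then obtain g0 where g0A: "g0 \<in> ?A" and yg: "y (inv g0 \<otimes> \<one>) \<noteq> 0" by blast
  have g0c: "g0 \<in> carrier G" using g0A by simp
  have ig0B: "inv g0 \<in> ?B" using yg g0c by simp
  obtain ge where ge: "bij_betw ge {..<card ?A} ?A" "ge 0 = g0" using enum_first[OF finA g0A] by blast
  obtain he where he: "bij_betw he {..<card ?B} ?B" "he 0 = inv g0" using enum_first[OF finB ig0B] by blast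
  define m where "m = card ?A"
  define n where "n = card ?B"
  have m0: "0 < m" unfolding m_def using finA g0A card_gt_0_iff by blast
  have n0: "0 < n" unfolding n_def using finB ig0B card_gt_0_iff by blast
  have h00: "ge 0 \<otimes> he 0 = \<one>" using ge(2) he(2) g0c by simp
  interpret D: dfsetup G x y m n ge he
    by (unfold_locales) (use grp xe ye xy ge he m0 n0 h00 in \<open>simp_all add: m_def n_def\<close>)
  show "gr_mult G y x = gr_one G"
  proof (cases "m = 1 \<or> n = 1")
    case True then show ?thesis using D.case_m1 D.case_n1 by blast
  next
    case False
    then have m2: "2 \<le> m" and n2: "2 \<le> n" using m0 n0 by auto
    obtain Q0 where Q0: "partition_on D.SS Q0" "realizable Q0 D.r D.s" "refines Q0 D.pi0"
      "\<forall>Q. partition_on D.SS Q \<and> realizable Q D.r D.s \<and> refines Q Q0 \<longrightarrow> Q = Q0"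
      by (rule D.exists_min)
    have "ULIE_partition TYPE('k) m n Q0"
      unfolding ULIE_partition_def
    proof (intro conjI)
      show "2 \<le> m" "2 \<le> n" by (fact m2, fact n2)
      show "partition_on (S_set m n) Q0" using Q0(1) by (simp add: D.SS_def)
      show "nondegenerate m n Q0" by (rule D.nondeg[OF Q0(1) Q0(3)])
      show "minimally_realizable TYPE('k) m n Q0"
        unfolding minimally_realizable_def
        using D.r_nz D.s_nz Q0(2) Q0(4) by (intro exI[of _ D.r] exI[of _ D.s]) (simp add: D.SS_def)
    qed
    then have DF: "group_ring_directly_finite TYPE('k) (Gamma m n Q0)" using RHS by blast
    have "gr_mult (Gamma m n Q0) (mk (Gamma m n Q0) (\<lambda>j. word_class (Gamma_rels Q0) [(Inr j, True)]) D.s n)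
           (mk (Gamma m n Q0) (\<lambda>i. word_class (Gamma_rels Q0) [(Inl i, True)]) D.r m) = gr_one (Gamma m n Q0)"
      using DF D.gamma_XY[OF Q0(1) Q0(2)] gr_elem_mk unfolding group_ring_directly_finite_def by blast
    then show ?thesis by (rule D.gamma_final[OF Q0(1) Q0(3)])
  qed
qed

lemma forward_dir:
  assumes inf: "infinite (UNIV :: 'g set)"
    and LHS: "\<forall>G :: 'g monoid. group G \<longrightarrow> group_ring_directly_finite TYPE('k::division_ring) G"
  shows "group_ring_directly_finite TYPE('k) (Gamma m n P)"
proof -
  obtain f :: "_ \<Rightarrow> 'g" where f: "inj_on f (carrier (Gamma m n P))"
    using countable_to_infinite[OF inf countable_Gamma] by blast
  have "group (tr_group (Gamma m n P) f)" by (rule tr_group_group[OF Gamma_group f])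
  then have "group_ring_directly_finite TYPE('k) (tr_group (Gamma m n P) f)" using LHS by blast
  then show ?thesis by (rule transfer_DF[OF Gamma_group f])
qed

theorem corollary4p15:
  assumes "infinite (UNIV :: 'g set)"
  shows "(\<forall>G :: 'g monoid. group G \<longrightarrow> group_ring_directly_finite TYPE('k::division_ring) G)
     \<longleftrightarrow> (\<forall>m n P. ULIE_partition TYPE('k) m n P \<longrightarrow>
             group_ring_directly_finite TYPE('k) (Gamma m n P))"
  using forward_dir[OF assms] reverse_dir by blast


end
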